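(* For every real number $k>0$ and all integers $0<m_1<m_2<\cdots<m_n$, the $n\times n$ matrix $M=\big((k+i)^{m_j}-(k+i-1)^{m_j}\big)_{i,j=1}^n$ has positive determinant. *)

theory Defs
  imports "Jordan_Normal_Form.Determinant"
begin

end

theory Submission
  imports Defs
begin


lemma sum_deriv:
  "((\<lambda>t. \<Sum>j<n. c j * t ^ e j) has_real_derivative (\<Sum>j<n. c j * (of_nat (e j) * t ^ (e j - 1)))) (at t)"
  by (auto intro!: derivative_eq_intros sum.cong simp: mult_ac)

lemma roots:
  fixes x :: "nat \<Rightarrow> real" and c :: "nat \<Rightarrow> real"
  assumes "\<forall>i j. i < j \<longrightarrow> j < n \<longrightarrow> x i < x j"
    and "0 < n \<longrightarrow> 0 < x 0"
    and "\<forall>i j. i < j \<longrightarrow> j < n \<longrightarrow> a i < a j"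
    and "\<forall>i<n. (\<Sum>j<n. c j * x i ^ a j) = 0"
  shows "\<forall>j<n. c j = 0"
  using assms
proof (induction n arbitrary: x a c)
  case 0
  then show ?case by simp
next
  case (Suc n)
  note xi = Suc.prems(1) and x0 = Suc.prems(2) and ai = Suc.prems(3) and r = Suc.prems(4)
  define e where "e j = a j - a 0" for j
  define q where "q t = (\<Sum>j<Suc n. c j * t ^ e j)" for t :: real
  have ale: "j < Suc n \<Longrightarrow> a 0 \<le> a j" for j using ai[rule_format, of 0 j] by (cases j) auto
  have xpos: "i < Suc n \<Longrightarrow> 0 < x i" for i using xi x0 by (cases i) force+
  have qx: "q (x i) = 0" if "i < Suc n" for i
  proof -
    have "(\<Sum>j<Suc n. c j * x i ^ a j) = x i ^ a 0 * q (x i)"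
      unfolding q_def sum_distrib_left
    proof (rule sum.cong)
      fix j assume "j \<in> {..<Suc n}"
      then have "a j = a 0 + e j" using ale[of j] by (auto simp: e_def)
      then show "c j * x i ^ a j = x i ^ a 0 * (c j * x i ^ e j)" by (simp add: power_add)
    qed simp
    then show ?thesis using r that xpos[OF that] by simp
  qed
  define c' where "c' j = c (Suc j) * of_nat (e (Suc j))" for j
  define a' where "a' j = e (Suc j) - 1" for j
  have qd: "DERIV q t :> (\<Sum>j<n. c' j * t ^ a' j)" for t
  proof -
    have "DERIV q t :> (\<Sum>j<Suc n. c j * (of_nat (e j) * t ^ (e j - 1)))"
      unfolding q_def by (rule sum_deriv)
    also have "(\<Sum>j<Suc n. c j * (of_nat (e j) * t ^ (e j - 1))) = (\<Sum>j<n. c' j * t ^ a' j)"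
      unfolding sum.lessThan_Suc_shift by (auto simp: e_def c'_def a'_def intro!: sum.cong)
    finally show ?thesis .
  qed
  have "\<exists>y. x i < y \<and> y < x (Suc i) \<and> (\<Sum>j<n. c' j * y ^ a' j) = 0" if "i < n" for i
  proof -
    have xs: "x i < x (Suc i)" using xi[rule_format, of i "Suc i"] that by simp
    from MVT2[OF xs qd]
    obtain z where "x i < z" "z < x (Suc i)" "q (x (Suc i)) - q (x i) = (x (Suc i) - x i) * (\<Sum>j<n. c' j * z ^ a' j)"
      by blast
    then show ?thesis using qx[of i] qx[of "Suc i"] that by auto
  qed
  then obtain y where y: "\<And>i. i < n \<Longrightarrow> x i < y i \<and> y i < x (Suc i) \<and> (\<Sum>j<n. c' j * y i ^ a' j) = 0"
    by metis
  have "\<forall>j<n. c' j = 0"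
  proof (rule Suc.IH[of y a'])
    show "\<forall>i j. i < j \<longrightarrow> j < n \<longrightarrow> y i < y j"
    proof (intro allI impI)
      fix i j assume "i < j" "j < n"
      have 1: "y i < x (Suc i)" using y[of i] \<open>i < j\<close> \<open>j < n\<close> by simp
      have 2: "x (Suc i) \<le> x j"
      proof (cases "Suc i = j")
        case False
        then show ?thesis using xi[rule_format, of "Suc i" j] \<open>i < j\<close> \<open>j < n\<close> by simp
      qed simp
      have 3: "x j < y j" using y[of j] \<open>j < n\<close> by simp
      from 1 2 3 have "y i < x (Suc i)" "x (Suc i) \<le> x j" "x j < y j" by simp_all
      then show "y i < y j" by simp
    qed
    show "0 < n \<longrightarrow> 0 < y 0" using y[of 0] xpos[of 0] by auto
    show "\<forall>i j. i < j \<longrightarrow> j < n \<longrightarrow> a' i < a' j"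
    proof (intro allI impI)
      fix i j assume "i < j" "j < n"
      then have "a 0 < a (Suc i)" "a (Suc i) < a (Suc j)"
        using ai[rule_format, of 0 "Suc i"] ai[rule_format, of "Suc i" "Suc j"] by simp_all
      then show "a' i < a' j" by (simp add: a'_def e_def)
    qed
    show "\<forall>i<n. (\<Sum>j<n. c' j * y i ^ a' j) = 0" using y by auto
  qed
  then have cS: "j < n \<Longrightarrow> c (Suc j) = 0" for j
    using ai[rule_format, of 0 "Suc j"] by (auto simp: c'_def e_def)
  have "q (x 0) = c 0" unfolding q_def sum.lessThan_Suc_shift using cS by (simp add: e_def)
  then have "c 0 = 0" using qx[of 0] by simp
  then show ?case using cS by (metis less_Suc_eq_0_disj)
qed


lemma gv_nonsing:
  fixes x :: "nat \<Rightarrow> real"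
  assumes "\<forall>i j. i < j \<longrightarrow> j < n \<longrightarrow> x i < x j"
    and "0 < n \<longrightarrow> 0 < x 0"
    and "\<forall>i j. i < j \<longrightarrow> j < n \<longrightarrow> a i < a j"
  shows "det (mat n n (\<lambda>(i, j). x i ^ a j)) \<noteq> 0"
proof
  let ?A = "mat n n (\<lambda>(i, j). x i ^ a j)"
  assume "det ?A = 0"
  then obtain v where v: "v \<in> carrier_vec n" "v \<noteq> 0\<^sub>v n" "?A *\<^sub>v v = 0\<^sub>v n"
    using det_0_iff_vec_prod_zero[of ?A n] by auto
  have "\<forall>i<n. (\<Sum>j<n. v $ j * x i ^ a j) = 0"
  proof (intro allI impI)
    fix i assume i: "i < n"
    have "(?A *\<^sub>v v) $ i = 0" using v(3) i by simp
    then show "(\<Sum>j<n. v $ j * x i ^ a j) = 0" using i v(1)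
      by (simp add: scalar_prod_def lessThan_atLeast0 mult.commute)
  qed
  from roots[OF assms this] have "v = 0\<^sub>v n" using v(1) by (intro eq_vecI) auto
  with v(2) show False by simp
qed


lemma gv_pos:
  fixes x :: "nat \<Rightarrow> real"
  assumes "\<forall>i j. i < j \<longrightarrow> j < n \<longrightarrow> x i < x j"
    and "0 < n \<longrightarrow> 0 < x 0"
    and "\<forall>i j. i < j \<longrightarrow> j < n \<longrightarrow> a i < a j"
  shows "det (mat n n (\<lambda>(i, j). x i ^ a j)) > 0"
  using assms
proof (induction n arbitrary: x)
  case 0
  then show ?case by simp
next
  case (Suc n)
  note xi = Suc.prems(1) and x0 = Suc.prems(2) and ai = Suc.prems(3)
  define A where "A t = mat (Suc n) (Suc n) (\<lambda>(i, j). (x(n := t)) i ^ a j)" for t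
  define C where "C j = cofactor (A 0) n j" for j
  define f where "f t = (\<Sum>j<Suc n. C j * t ^ a j)" for t :: real
  have Acar: "A t \<in> carrier_mat (Suc n) (Suc n)" for t unfolding A_def by simp
  have del: "mat_delete (A t) n j = mat_delete (A 0) n j" for t j
    unfolding mat_delete_def A_def by (intro eq_matI) auto
  have detA: "det (A t) = f t" for t
  proof -
    have "det (A t) = (\<Sum>j<Suc n. A t $$ (n, j) * cofactor (A t) n j)"
      by (rule laplace_expansion_row[OF Acar]) simp
    also have "\<dots> = f t" unfolding f_def C_def cofactor_def del[of t]
      by (intro sum.cong) (auto simp: A_def mult.commute)
    finally show ?thesis .
  qed
  have Cn: "C n > 0"
  proof -
    have "mat_delete (A 0) n n = mat n n (\<lambda>(i, j). x i ^ a j)"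
      unfolding mat_delete_def A_def by (intro eq_matI) auto
    moreover have "det (mat n n (\<lambda>(i, j). x i ^ a j)) > 0"
      by (rule Suc.IH) (use xi x0 ai in auto)
    ultimately show ?thesis by (simp add: C_def cofactor_def)
  qed
  have Ax: "A (x n) = mat (Suc n) (Suc n) (\<lambda>(i, j). x i ^ a j)"
    unfolding A_def by simp
  have xpos: "i < Suc n \<Longrightarrow> 0 < x i" for i using xi x0 by (cases i) force+
  define L where "L = (if n = 0 then 0 else x (n - 1))"
  have L: "L < x n" using xpos[of n] xi unfolding L_def by auto
  have fnz: "f t \<noteq> 0" if t: "L < t" for t
  proof -
    have "det (mat (Suc n) (Suc n) (\<lambda>(i, j). (x(n := t)) i ^ a j)) \<noteq> 0"
    proof (rule gv_nonsing)
      show "\<forall>i j. i < j \<longrightarrow> j < Suc n \<longrightarrow> (x(n := t)) i < (x(n := t)) j"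
      proof (intro allI impI)
        fix i j assume ij: "i < j" "j < Suc n"
        show "(x(n := t)) i < (x(n := t)) j"
        proof (cases "j = n")
          case True
          then have "x i \<le> L" using ij xi[rule_format, of i "n-1"] unfolding L_def by (cases "i = n-1"; cases n) (auto simp: less_imp_le)
          then show ?thesis using True ij t by auto
        next
          case False
          then show ?thesis using ij xi by auto
        qed
      qed
      show "0 < Suc n \<longrightarrow> 0 < (x(n := t)) 0" using xpos[of 0] t L unfolding L_def by auto
      show "\<forall>i j. i < j \<longrightarrow> j < Suc n \<longrightarrow> a i < a j" using ai by blast
    qed
    then show ?thesis using detA[of t] unfolding A_def by simp
  qed
  have fcont: "continuous_on S f" for S unfolding f_def by (intro continuous_intros)
  have "\<exists>T\<ge>x n. f T > 0"
  proof (cases n)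
    case 0
    then show ?thesis using Cn xpos[of 0] by (intro exI[of _ "x n"]) (auto simp: f_def)
  next
    case (Suc n')
    define S where "S = (\<Sum>j<n. \<bar>C j\<bar>)"
    define T where "T = max (x n) (max 1 (S / C n + 1))"
    have T1: "T \<ge> 1" and TS: "T > S / C n" and Tx: "T \<ge> x n" unfolding T_def by auto
    have an: "a n \<ge> 1" using ai[rule_format, of 0 n] Suc by auto
    have "\<bar>\<Sum>j<n. C j * T ^ a j\<bar> \<le> (\<Sum>j<n. \<bar>C j\<bar> * T ^ (a n - 1))"
    proof -
      have "\<bar>\<Sum>j<n. C j * T ^ a j\<bar> \<le> (\<Sum>j<n. \<bar>C j * T ^ a j\<bar>)" by (rule sum_abs)
      also have "\<dots> \<le> (\<Sum>j<n. \<bar>C j\<bar> * T ^ (a n - 1))"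
      proof (rule sum_mono)
        fix j assume "j \<in> {..<n}"
        then have "a j \<le> a n - 1" using ai[rule_format, of j n] by auto
        then have "T ^ a j \<le> T ^ (a n - 1)" using T1 by (rule power_increasing)
        then show "\<bar>C j * T ^ a j\<bar> \<le> \<bar>C j\<bar> * T ^ (a n - 1)"
          using T1 by (simp add: abs_mult mult_left_mono)
      qed
      finally show ?thesis .
    qed
    then have b: "\<bar>\<Sum>j<n. C j * T ^ a j\<bar> \<le> S * T ^ (a n - 1)"
      by (simp add: S_def sum_distrib_right)
    have "C n * T ^ a n = (C n * T) * T ^ (a n - 1)"
      using an by (cases "a n") (auto simp: mult.assoc)
    moreover have "C n * T > S" using TS Cn by (simp add: field_simps)
    moreover have "T ^ (a n - 1) > 0" using T1 by simp
    ultimately have "C n * T ^ a n > S * T ^ (a n - 1)" by (metis mult_strict_right_mono)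
    then have "f T > 0" using b unfolding f_def by simp
    then show ?thesis using Tx by blast
  qed
  then obtain T where T: "T \<ge> x n" "f T > 0" by blast
  have "f (x n) > 0"
  proof (rule ccontr)
    assume "\<not> f (x n) > 0"
    then obtain z where "x n \<le> z" "z \<le> T" "f z = 0"
      using IVT'[of f "x n" 0 T] T fcont by force
    then show False using fnz[of z] L by auto
  qed
  then show ?case using detA[of "x n"] Ax by simp
qed


theorem claim4:
  fixes k :: real and n :: nat and m :: "nat \<Rightarrow> nat"
  assumes "k > 0"
    and "0 < m 0"
    and "\<And>j. Suc j < n \<Longrightarrow> m j < m (Suc j)"
  shows "det (mat n n (\<lambda>(i, j). (k + real (i + 1)) ^ m j - (k + real (i + 1) - 1) ^ m j)) > 0"
proof -
  define b where "b j = (case j of 0 \<Rightarrow> 0 | Suc j' \<Rightarrow> m j')" for j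
  define g where "g i j = (k + real i) ^ b j" for i j
  define N where "N = Suc n"
  define D where "D s = mat N N (\<lambda>(i, j). if s < i then g i j - g (i - 1) j else g i j)" for s
  have minc: "\<forall>i j. i < j \<longrightarrow> j < n \<longrightarrow> m i < m j"
  proof (intro allI impI)
    fix i j assume "i < j" "j < n"
    then show "m i < m j"
    proof (induction j)
      case 0 then show ?case by simp
    next
      case (Suc j)
      then show ?case using assms(3)[of j] by (cases "i = j") auto
    qed
  qed
  have Gpos: "det (mat N N (\<lambda>(i, j). (k + real i) ^ b j)) > 0"
  proof (rule gv_pos)
    show "\<forall>i j. i < j \<longrightarrow> j < N \<longrightarrow> k + real i < k + real j" by simp
    show "0 < N \<longrightarrow> 0 < k + real 0" using assms(1) by simp
    show "\<forall>i j. i < j \<longrightarrow> j < N \<longrightarrow> b i < b j"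
    proof (intro allI impI)
      fix i j assume "i < j" "j < N"
      then obtain j' where j': "j = Suc j'" "j' < n" by (cases j) (auto simp: N_def)
      show "b i < b j"
      proof (cases i)
        case 0
        then show ?thesis using j' assms(2) minc[rule_format, of 0 j'] by (cases j') (auto simp: b_def)
      next
        case (Suc i')
        then show ?thesis using j' \<open>i < j\<close> minc by (auto simp: b_def)
      qed
    qed
  qed
  have DN: "D n = mat N N (\<lambda>(i, j). (k + real i) ^ b j)"
    unfolding D_def g_def N_def by (intro eq_matI) auto
  have Dcar: "D s \<in> carrier_mat N N" for s unfolding D_def by simp
  have Dstep: "D s = addrow (-1) (Suc s) s (D (Suc s))" if "Suc s < N" for s
    using that unfolding D_def mat_addrow_def by (intro eq_matI) auto
  have Deq: "det (D s) = det (D n)" if "s \<le> n" for s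
    using that
  proof (induction s rule: inc_induct)
    case base then show ?case by simp
  next
    case (step s)
    have "det (D s) = det (D (Suc s))"
      using Dstep[of s] det_addrow[of s N "Suc s" "D (Suc s)" "-1"] step.hyps Dcar
      by (simp add: N_def)
    then show ?case using step.IH by simp
  qed
  have "det (D 0) = (\<Sum>i<N. D 0 $$ (i, 0) * cofactor (D 0) i 0)"
    by (rule laplace_expansion_column[OF Dcar]) (simp add: N_def)
  also have "\<dots> = cofactor (D 0) 0 0"
    unfolding N_def sum.lessThan_Suc_shift by (simp add: D_def g_def b_def N_def)
  also have "\<dots> = det (mat_delete (D 0) 0 0)" by (simp add: cofactor_def)
  also have "mat_delete (D 0) 0 0 = mat n n (\<lambda>(i, j). (k + real (i + 1)) ^ m j - (k + real (i + 1) - 1) ^ m j)"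
    unfolding mat_delete_def D_def N_def g_def b_def by (intro eq_matI) auto
  finally show ?thesis using Deq[of 0] DN Gpos by simp
qed

end
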